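(* For all positive integers $p,q$, \[ L_e(p,q) \geq \sum_{i=1}^{\frac{(p-1)(p-2)}{2}+1} M_p(i)\, N_e(q)^i\, N_s(q)^{\frac{p(p-1)}{2}-i}\, 2^{\frac{pq(q-1)}{2}}. \]
   Context: All graphs are simple undirected labeled graphs on the vertex set $\{1,\dots,n\}$. For such a graph with adjacency matrix $W$ and degree matrix $D$, its Laplacian is $L = D - W$; if the graph has at least one edge, its normalized Laplacian matrix is $\frac{1}{\mathrm{Tr}(L)}L$, which is a density matrix (Hermitian, positive semidefinite, trace $1$). An $n\times n$ density matrix $\rho$ with $n=pq$ is separable in $\mathbb{C}^p\otimes\mathbb{C}^q$ if $\rho=\sum_i c_i\,\rho_i\otimes\eta_i$ (finite sum) where the $\rho_i$ are $p\times p$ density matrices, the $\eta_i$ are $q\times q$ density matrices, $c_i\ge 0$ and $\sum_i c_i=1$; otherwise it is entangled. $L_s(p,q)$ denotes the number of labeled graphs on $n=pq$ vertices with at least one edge whose normalized Laplacian matrix is separable in $\mathbb{C}^p\otimes\mathbb{C}^q$, and $L_e(p,q)$ the number of those whose normalized Laplacian is entangled; thus $L_s(p,q)+L_e(p,q)=L(pq):=2^{pq(pq-1)/2}-1$. A square matrix is line sum symmetric if for each $i$ its $i$-th row sum equals its $i$-th column sum. $N_s(n)$ denotes the number of $n\times n$ matrices with entries in $\{0,1\}$ that are line sum symmetric, and $N_e(n)=2^{n^2}-N_s(n)$ the number of $n\times n$ $0$-$1$ matrices that are not line sum symmetric. For positive integers $n$ and nonnegative integers $i$, $M_n(i)$ denotes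 the number of symmetric $n\times n$ matrices with entries in $\{0,1\}$, all diagonal entries $0$, exactly $2i$ nonzero entries, and at least one row containing exactly one entry equal to $1$ (equivalently, the number of labeled graphs on $n$ vertices with $i$ edges having at least one vertex of degree $1$). *)

theory Defs
  imports Complex_Main "HOL-Library.FuncSet"
begin

text \<open>An n x n complex matrix is represented by a function nat => nat => complex,
  only entries with indices < n are relevant (0-based indices).\<close>

definition hermitian_mat :: "nat \<Rightarrow> (nat \<Rightarrow> nat \<Rightarrow> complex) \<Rightarrow> bool" where
  "hermitian_mat n A \<longleftrightarrow> (\<forall>i<n. \<forall>j<n. A i j = cnj (A j i))"

definition psd_mat :: "nat \<Rightarrow> (nat \<Rightarrow> nat \<Rightarrow> complex) \<Rightarrow> bool" where
  "psd_mat n A \<longleftrightarrow> (\<forall>v :: nat \<Rightarrow> complex.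
      Re (\<Sum>i<n. \<Sum>j<n. cnj (v i) * A i j * v j) \<ge> 0)"

definition trace_mat :: "nat \<Rightarrow> (nat \<Rightarrow> nat \<Rightarrow> complex) \<Rightarrow> complex" where
  "trace_mat n A = (\<Sum>i<n. A i i)"

definition density_mat :: "nat \<Rightarrow> (nat \<Rightarrow> nat \<Rightarrow> complex) \<Rightarrow> bool" where
  "density_mat n A \<longleftrightarrow> hermitian_mat n A \<and> psd_mat n A \<and> trace_mat n A = 1"

text \<open>Separability in C^p (x) C^q, with the standard Kronecker identification
  of index a < p*q with the pair (a div q, a mod q).\<close>

definition separable :: "nat \<Rightarrow> nat \<Rightarrow> (nat \<Rightarrow> nat \<Rightarrow> complex) \<Rightarrow> bool" where
  "separable p q \<rho> \<longleftrightarrow> density_mat (p * q) \<rho> \<and>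
     (\<exists>(m::nat) (c :: nat \<Rightarrow> real) (\<rho>s :: nat \<Rightarrow> nat \<Rightarrow> nat \<Rightarrow> complex)
        (\<eta>s :: nat \<Rightarrow> nat \<Rightarrow> nat \<Rightarrow> complex).
        (\<forall>k<m. c k \<ge> 0 \<and> density_mat p (\<rho>s k) \<and> density_mat q (\<eta>s k)) \<and>
        (\<Sum>k<m. c k) = 1 \<and>
        (\<forall>a<p*q. \<forall>b<p*q. \<rho> a b =
            (\<Sum>k<m. complex_of_real (c k) * \<rho>s k (a div q) (b div q) * \<eta>s k (a mod q) (b mod q))))"

definition graphs :: "nat \<Rightarrow> nat set set set" where
  "graphs n = Pow {e. e \<subseteq> {1..n} \<and> card e = 2}"

definition degree :: "nat set set \<Rightarrow> nat \<Rightarrow> nat" where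
  "degree E v = card {e \<in> E. v \<in> e}"

text \<open>Laplacian L = D - W; matrix index a < n corresponds to vertex a+1.\<close>

definition laplacian :: "nat set set \<Rightarrow> nat \<Rightarrow> nat \<Rightarrow> complex" where
  "laplacian E a b =
     (if a = b then of_nat (degree E (a+1)) else 0) - (if {a+1, b+1} \<in> E then 1 else 0)"

definition normalized_laplacian :: "nat \<Rightarrow> nat set set \<Rightarrow> nat \<Rightarrow> nat \<Rightarrow> complex" where
  "normalized_laplacian n E a b = laplacian E a b / trace_mat n (laplacian E)"

definition L_s :: "nat \<Rightarrow> nat \<Rightarrow> nat" where
  "L_s p q = card {E \<in> graphs (p*q). E \<noteq> {} \<and>
                     separable p q (normalized_laplacian (p*q) E)}"

definition L_e :: "nat \<Rightarrow> nat \<Rightarrow> nat" where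
  "L_e p q = card {E \<in> graphs (p*q). E \<noteq> {} \<and>
                     \<not> separable p q (normalized_laplacian (p*q) E)}"

definition zo_mats :: "nat \<Rightarrow> (nat \<times> nat \<Rightarrow> nat) set" where
  "zo_mats n = ({1..n} \<times> {1..n}) \<rightarrow>\<^sub>E {0, 1}"

definition line_sum_symmetric :: "nat \<Rightarrow> (nat \<times> nat \<Rightarrow> nat) \<Rightarrow> bool" where
  "line_sum_symmetric n A \<longleftrightarrow>
     (\<forall>i\<in>{1..n}. (\<Sum>j=1..n. A (i, j)) = (\<Sum>j=1..n. A (j, i)))"

definition N_s :: "nat \<Rightarrow> nat" where
  "N_s n = card {A \<in> zo_mats n. line_sum_symmetric n A}"

definition N_e :: "nat \<Rightarrow> nat" where
  "N_e n = 2 ^ (n^2) - N_s n"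

definition M :: "nat \<Rightarrow> nat \<Rightarrow> nat" where
  "M n i = card {A \<in> zo_mats n.
        (\<forall>j\<in>{1..n}. \<forall>k\<in>{1..n}. A (j, k) = A (k, j)) \<and>
        (\<forall>j\<in>{1..n}. A (j, j) = 0) \<and>
        card {x \<in> {1..n} \<times> {1..n}. A x \<noteq> 0} = 2 * i \<and>
        (\<exists>j\<in>{1..n}. card {k \<in> {1..n}. A (j, k) = 1} = 1)}"

end

theory Submission
  imports Defs
begin


lemma sum_lessThan_add_split:
  fixes m n :: nat
  shows "(\<Sum>a<m+n. f a) = (\<Sum>a<m. f a) + (\<Sum>x<n. f (m+x))"
  by (induction n) (auto simp: add.assoc)

lemma sum_prod_split:
  fixes p q :: nat
  shows "(\<Sum>a<p*q. f a) = (\<Sum>k<p. \<Sum>x<q. f (k*q+x))"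
proof (induction p)
  case 0 then show ?case by simp
next
  case (Suc p)
  have "(\<Sum>a<Suc p*q. f a) = (\<Sum>a<p*q+q. f a)" by (simp add: add.commute)
  also have "\<dots> = (\<Sum>a<p*q. f a) + (\<Sum>x<q. f (p*q+x))" by (rule sum_lessThan_add_split)
  finally show ?case using Suc by simp
qed

lemma mult_if01:
  "(x::'a::semiring_1) * (if P then 1 else 0) = (if P then x else 0)"
  "(if P then 1 else 0) * (x::'a::semiring_1) = (if P then x else 0)"
  "cnj (if P then 1 else 0) = (if P then 1 else 0)"
  by auto

lemma sum_if_const: "(\<Sum>j\<in>S. if P then f j else 0) = (if P then sum f S else 0)"
  by auto

lemma idx_lt:
  fixes k x p q :: nat
  assumes "k < p" "x < q" shows "k*q+x < p*q"
proof -
  have "k*q+x < k*q+q" using assms by simp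
  also have "\<dots> = Suc k * q" by simp
  also have "\<dots> \<le> p*q" using assms by (intro mult_le_mono1) simp
  finally show ?thesis .
qed

lemma psd_rowsum_zero:
  fixes A :: "nat \<Rightarrow> nat \<Rightarrow> complex"
  assumes psd: "psd_mat n A" and herm: "hermitian_mat n A"
    and tot: "(\<Sum>i<n. \<Sum>j<n. A i j) = 0" and i0: "i0 < n"
  shows "(\<Sum>j<n. A i0 j) = 0"
proof -
  define s where "s = (\<Sum>j<n. A i0 j)"
  have cs: "(\<Sum>i<n. A i i0) = cnj s"
  proof -
    have "(\<Sum>i<n. A i i0) = (\<Sum>i<n. cnj (A i0 i))"
      using herm i0 unfolding hermitian_mat_def by (intro sum.cong refl) blast
    then show ?thesis by (simp add: s_def)
  qed
  define a where "a = Re (A i0 i0)"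
  have psdv: "\<And>v. Re (\<Sum>i<n. \<Sum>j<n. cnj (v i) * A i j * v j) \<ge> 0"
    using psd unfolding psd_mat_def by blast
  have "Re (\<Sum>i<n. \<Sum>j<n. cnj ((\<lambda>j. if j = i0 then 1 else 0) i) * A i j * (\<lambda>j. if j = i0 then 1 else 0) j) \<ge> 0"
    by (rule psdv)
  moreover have "(\<Sum>i<n. \<Sum>j<n. cnj ((\<lambda>j. if j = i0 then 1 else 0) i) * A i j * (\<lambda>j. if j = i0 then 1 else 0) j) = A i0 i0"
  proof -
    have "(\<Sum>i<n. \<Sum>j<n. cnj ((\<lambda>j. if j = i0 then 1 else 0) i) * A i j * (\<lambda>j. if j = i0 then 1 else 0) j)
       = (\<Sum>i<n. if i = i0 then (\<Sum>j<n. if j = i0 then A i j else 0) else 0)"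
      by (intro sum.cong refl) (simp add: mult_if01)
    then show ?thesis using i0 by simp
  qed
  ultimately have a0: "a \<ge> 0" by (simp add: a_def)
  have key: "Re (\<Sum>i<n. \<Sum>j<n. cnj (1 + (if i = i0 then z else 0)) * A i j * (1 + (if j = i0 then z else 0)))
      = Re (cnj z * s + z * cnj s) + (cmod z)^2 * a" for z
  proof -
    have "(\<Sum>i<n. \<Sum>j<n. cnj (1 + (if i = i0 then z else 0)) * A i j * (1 + (if j = i0 then z else 0)))
      = (\<Sum>i<n. \<Sum>j<n. A i j + (if i = i0 then cnj z * A i j else 0) + (if j = i0 then z * A i j else 0)
          + (if i = i0 then (if j = i0 then cnj z * z * A i j else 0) else 0))"
      by (intro sum.cong refl) (simp add: algebra_simps)
    also have "\<dots> = (\<Sum>i<n. \<Sum>j<n. A i j) + (\<Sum>i<n. \<Sum>j<n. (if i = i0 then cnj z * A i j else 0))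
       + (\<Sum>i<n. \<Sum>j<n. (if j = i0 then z * A i j else 0))
       + (\<Sum>i<n. \<Sum>j<n. (if i = i0 then (if j = i0 then cnj z * z * A i j else 0) else 0))"
      by (simp add: sum.distrib)
    also have "\<dots> = cnj z * s + z * cnj s + cnj z * z * A i0 i0"
      using i0 tot cs by (simp add: sum_distrib_left[symmetric] s_def sum_if_const)
    finally have "(\<Sum>i<n. \<Sum>j<n. cnj (1 + (if i = i0 then z else 0)) * A i j * (1 + (if j = i0 then z else 0))) = cnj z * s + z * cnj s + cnj z * z * A i0 i0" .
    moreover have "cnj z * z = of_real ((cmod z)^2)"
      using complex_norm_square[of z] by (simp add: mult.commute)
    ultimately show ?thesis by (simp add: a_def)
  qed
  show ?thesis unfolding s_def[symmetric]
  proof (rule ccontr)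
    assume sne: "s \<noteq> 0"
    define t where "t = 1 / (a + 1)"
    have t0: "t > 0" using a0 by (simp add: t_def)
    have ta: "t * a < 1" using a0 by (simp add: t_def field_simps)
    define z where "z = - (of_real t * s)"
    have "Re (\<Sum>i<n. \<Sum>j<n. cnj ((\<lambda>j. 1 + (if j = i0 then z else 0)) i) * A i j * (\<lambda>j. 1 + (if j = i0 then z else 0)) j) \<ge> 0"
      by (rule psdv)
    then have "Re (cnj z * s + z * cnj s) + (cmod z)^2 * a \<ge> 0"
      using key[of z] by simp
    moreover have "Re (cnj z * s + z * cnj s) = - 2 * t * (cmod s)^2"
      using cmod_power2[of s] by (simp add: z_def algebra_simps power2_eq_square)
    moreover have "(cmod z)^2 = t^2 * (cmod s)^2"
      using t0 by (simp add: z_def norm_mult power_mult_distrib)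
    ultimately have "- 2 * t * (cmod s)^2 + t^2 * (cmod s)^2 * a \<ge> 0" by simp
    then have "t * (cmod s)^2 * (t * a - 2) \<ge> 0" by (simp add: algebra_simps power2_eq_square)
    moreover have "t * (cmod s)^2 > 0" using t0 sne by simp
    ultimately have "t * a - 2 \<ge> 0" by (simp add: zero_le_mult_iff)
    with ta show False by simp
  qed
qed

lemma herm_total_real:
  fixes A :: "nat \<Rightarrow> nat \<Rightarrow> complex"
  assumes herm: "hermitian_mat n A"
  shows "cnj (\<Sum>i<n. \<Sum>j<n. A i j) = (\<Sum>i<n. \<Sum>j<n. A i j)"
proof -
  have "cnj (\<Sum>i<n. \<Sum>j<n. A i j) = (\<Sum>i<n. \<Sum>j<n. cnj (A i j))" by simp
  also have "\<dots> = (\<Sum>i<n. \<Sum>j<n. A j i)"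
  proof (intro sum.cong refl)
    fix i j assume "i \<in> {..<n}" "j \<in> {..<n}"
    then have "A j i = cnj (A i j)" using herm unfolding hermitian_mat_def by blast
    then show "cnj (A i j) = A j i" by simp
  qed
  also have "\<dots> = (\<Sum>i<n. \<Sum>j<n. A i j)" by (rule sum.swap)
  finally show ?thesis .
qed

lemma cnj_fixed_real: "cnj (w::complex) = w \<Longrightarrow> w = of_real (Re w)"
  by (simp add: complex_eq_iff)

lemma density_total:
  assumes "density_mat n A"
  shows "(\<Sum>i<n. \<Sum>j<n. A i j) = of_real (Re (\<Sum>i<n. \<Sum>j<n. A i j))"
    and "Re (\<Sum>i<n. \<Sum>j<n. A i j) \<ge> 0"
proof -
  have h: "hermitian_mat n A" and ps: "psd_mat n A" using assms by (auto simp: density_mat_def)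
  from herm_total_real[OF h] show "(\<Sum>i<n. \<Sum>j<n. A i j) = of_real (Re (\<Sum>i<n. \<Sum>j<n. A i j))"
    by (rule cnj_fixed_real)
  have psdv: "\<And>v. Re (\<Sum>i<n. \<Sum>j<n. cnj (v i) * A i j * v j) \<ge> 0"
    using ps unfolding psd_mat_def by blast
  have "Re (\<Sum>i<n. \<Sum>j<n. cnj ((\<lambda>_. 1) i) * A i j * (\<lambda>_. 1) j) \<ge> 0"
    by (rule psdv)
  then show "Re (\<Sum>i<n. \<Sum>j<n. A i j) \<ge> 0" by simp
qed

lemma sep_crit:
  fixes \<rho> :: "nat \<Rightarrow> nat \<Rightarrow> complex"
  assumes sep: "separable p q \<rho>" and tot: "(\<Sum>a<p*q. \<Sum>b<p*q. \<rho> a b) = 0"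
    and k: "k < p" and a: "a < q"
  shows "(\<Sum>l<p. \<Sum>b<q. \<rho> (k*q+b) (l*q+a)) = 0"
proof -
  obtain m c \<rho>s \<eta>s where
    hc: "\<forall>j<(m::nat). c j \<ge> 0 \<and> density_mat p (\<rho>s j) \<and> density_mat q (\<eta>s j)" and
    hsum: "\<forall>a<p*q. \<forall>b<p*q. \<rho> a b =
            (\<Sum>j<m. complex_of_real (c j) * \<rho>s j (a div q) (b div q) * \<eta>s j (a mod q) (b mod q))"
    using sep unfolding separable_def by blast
  have q0: "q > 0" using a by simp
  have exp: "\<rho> (k*q+x) (l*q+y) = (\<Sum>j<m. complex_of_real (c j) * \<rho>s j k l * \<eta>s j x y)"
    if "k < p" "x < q" "l < p" "y < q" for k x l y
  proof -
    have "k*q+x < p*q" using that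
      by (simp add: idx_lt)
    moreover have "l*q+y < p*q" using that
      by (simp add: idx_lt)
    ultimately show ?thesis using hsum that by simp
  qed
  define R where "R j = (\<Sum>k<p. \<Sum>l<p. \<rho>s j k l)" for j
  define H where "H j = (\<Sum>x<q. \<Sum>y<q. \<eta>s j x y)" for j
  have "0 = (\<Sum>k<p. \<Sum>x<q. \<Sum>l<p. \<Sum>y<q. \<rho> (k*q+x) (l*q+y))"
    using tot by (simp add: sum_prod_split)
  also have "\<dots> = (\<Sum>k<p. \<Sum>x<q. \<Sum>l<p. \<Sum>y<q. \<Sum>j<m. complex_of_real (c j) * \<rho>s j k l * \<eta>s j x y)"
    using exp by (intro sum.cong refl) simp
  also have "\<dots> = (\<Sum>j<m. \<Sum>k<p. \<Sum>x<q. \<Sum>l<p. \<Sum>y<q. complex_of_real (c j) * \<rho>s j k l * \<eta>s j x y)"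
    by (simp only: sum.swap[where B="{..<m}"])
  also have "\<dots> = (\<Sum>j<m. complex_of_real (c j) * R j * H j)"
  proof (intro sum.cong refl)
    fix j
    have "complex_of_real (c j) * R j * H j = (\<Sum>k<p. \<Sum>l<p. \<Sum>x<q. \<Sum>y<q. complex_of_real (c j) * \<rho>s j k l * \<eta>s j x y)"
      unfolding R_def H_def
      apply (simp only: sum_distrib_left[of "complex_of_real (c j)"])
      apply (simp only: sum_distrib_right)
      apply (simp only: sum_distrib_left)
      done
    also have "\<dots> = (\<Sum>k<p. \<Sum>x<q. \<Sum>l<p. \<Sum>y<q. complex_of_real (c j) * \<rho>s j k l * \<eta>s j x y)"
      by (rule sum.cong[OF refl], rule sum.swap)
    finally show "(\<Sum>k<p. \<Sum>x<q. \<Sum>l<p. \<Sum>y<q. complex_of_real (c j) * \<rho>s j k l * \<eta>s j x y) = complex_of_real (c j) * R j * H j" by simp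
  qed
  finally have tot2: "(\<Sum>j<m. complex_of_real (c j) * R j * H j) = 0" by simp
  have Rr: "R j = of_real (Re (R j))" "Re (R j) \<ge> 0" if "j < m" for j
    using density_total[of p "\<rho>s j"] hc that unfolding R_def by auto
  have Hr: "H j = of_real (Re (H j))" "Re (H j) \<ge> 0" if "j < m" for j
    using density_total[of q "\<eta>s j"] hc that unfolding H_def by auto
  have "(\<Sum>j<m. complex_of_real (c j) * R j * H j) = of_real (\<Sum>j<m. c j * Re (R j) * Re (H j))"
    unfolding of_real_sum
  proof (intro sum.cong refl)
    fix j assume "j \<in> {..<m}"
    then have "R j = of_real (Re (R j))" "H j = of_real (Re (H j))" using Rr(1) Hr(1) by auto
    then show "complex_of_real (c j) * R j * H j = complex_of_real (c j * Re (R j) * Re (H j))"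
      by (metis of_real_mult)
  qed
  with tot2 have "complex_of_real (\<Sum>j<m. c j * Re (R j) * Re (H j)) = 0" by metis
  then have "(\<Sum>j<m. c j * Re (R j) * Re (H j)) = 0" by (simp only: of_real_eq_0_iff)
  moreover have "\<forall>j\<in>{..<m}. 0 \<le> c j * Re (R j) * Re (H j)"
    using Rr(2) Hr(2) hc by auto
  ultimately have z: "c j * Re (R j) * Re (H j) = 0" if "j < m" for j
    using sum_nonneg_eq_0_iff[of "{..<m}" "\<lambda>j. c j * Re (R j) * Re (H j)"] that by auto
  have "(\<Sum>l<p. \<Sum>b<q. \<rho> (k*q+b) (l*q+a)) = (\<Sum>l<p. \<Sum>b<q. \<Sum>j<m. complex_of_real (c j) * \<rho>s j k l * \<eta>s j b a)"
    using exp k a by (intro sum.cong refl) simp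
  also have "\<dots> = (\<Sum>j<m. \<Sum>l<p. \<Sum>b<q. complex_of_real (c j) * \<rho>s j k l * \<eta>s j b a)"
    by (simp only: sum.swap[where B="{..<m}"])
  also have "\<dots> = (\<Sum>j<m. complex_of_real (c j) * (\<Sum>l<p. \<rho>s j k l) * (\<Sum>b<q. \<eta>s j b a))"
    apply (rule sum.cong[OF refl])
    apply (simp only: sum_distrib_left[of "complex_of_real (c _)"])
    apply (simp only: sum_distrib_right)
    apply (simp only: sum_distrib_left)
    done
  also have "\<dots> = 0"
  proof (rule sum.neutral, rule ballI)
    fix j assume "j \<in> {..<m}"
    then have j: "j < m" by simp
    have dp: "density_mat p (\<rho>s j)" and dq: "density_mat q (\<eta>s j)" using hc j by auto
    from z[OF j] have "c j = 0 \<or> Re (R j) = 0 \<or> Re (H j) = 0" by simp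
    then show "complex_of_real (c j) * (\<Sum>l<p. \<rho>s j k l) * (\<Sum>b<q. \<eta>s j b a) = 0"
    proof (elim disjE)
      assume "c j = 0" then show ?thesis by simp
    next
      assume "Re (R j) = 0"
      then have "R j = 0" using Rr(1)[OF j] by simp
      then have "(\<Sum>l<p. \<rho>s j k l) = 0"
        using psd_rowsum_zero[of p "\<rho>s j" k] dp k unfolding R_def density_mat_def by blast
      then show ?thesis by simp
    next
      assume "Re (H j) = 0"
      then have "H j = 0" using Hr(1)[OF j] by simp
      then have r0: "(\<Sum>b<q. \<eta>s j a b) = 0"
        using psd_rowsum_zero[of q "\<eta>s j" a] dq a unfolding H_def density_mat_def by blast
      have "(\<Sum>b<q. \<eta>s j b a) = (\<Sum>b<q. cnj (\<eta>s j a b))"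
      proof (intro sum.cong refl)
        fix b assume "b \<in> {..<q}"
        then show "\<eta>s j b a = cnj (\<eta>s j a b)" using dq a unfolding density_mat_def hermitian_mat_def by blast
      qed
      also have "\<dots> = 0" using r0 by (metis cnj_sum complex_cnj_zero)
      finally show ?thesis by simp
    qed
  qed
  finally show ?thesis .
qed

lemma graphs_finite: "E \<in> graphs n \<Longrightarrow> finite E"
  unfolding graphs_def by (rule finite_subset[of _ "Pow {1..n}"]) auto

lemma graph_edge: "E \<in> graphs n \<Longrightarrow> e \<in> E \<Longrightarrow> e \<subseteq> {1..n} \<and> card e = 2"
  unfolding graphs_def by auto

lemma degree_sum:
  assumes E: "E \<in> graphs n" and x: "x < n"
  shows "degree E (x+1) = card {b\<in>{..<n}. {x+1, b+1} \<in> E}"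
proof -
  have "card {b\<in>{..<n}. {x+1, b+1} \<in> E} = card ((\<lambda>b. {x+1, b+1}) ` {b\<in>{..<n}. {x+1, b+1} \<in> E})"
  proof (rule card_image[symmetric], rule inj_onI)
    fix b b' assume b: "b \<in> {b\<in>{..<n}. {x+1, b+1} \<in> E}" and b': "b' \<in> {b\<in>{..<n}. {x+1, b+1} \<in> E}"
      and eq: "{x+1, b+1} = {x+1, b'+1}"
    have "card {x+1, b+1} = 2" using b graph_edge[OF E] by blast
    then have "b \<noteq> x" by auto
    with eq show "b = b'" by (auto simp: doubleton_eq_iff)
  qed
  also have "(\<lambda>b. {x+1, b+1}) ` {b\<in>{..<n}. {x+1, b+1} \<in> E} = {e \<in> E. x+1 \<in> e}"
  proof (rule set_eqI, rule iffI)
    fix e assume "e \<in> (\<lambda>b. {x+1, b+1}) ` {b\<in>{..<n}. {x+1, b+1} \<in> E}"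
    then show "e \<in> {e \<in> E. x+1 \<in> e}" by auto
  next
    fix e assume "e \<in> {e \<in> E. x+1 \<in> e}"
    then have eE: "e \<in> E" and xe: "x+1 \<in> e" by auto
    from graph_edge[OF E eE] have sub: "e \<subseteq> {1..n}" and c2: "card e = 2" by auto
    from c2 obtain u v where uv: "e = {u, v}" "u \<noteq> v" by (auto simp: card_2_iff)
    obtain w where ew: "e = {x+1, w}" and w: "w \<in> {1..n}"
      using uv xe sub by (metis doubleton_eq_iff insert_commute insert_subset insertE singletonD)
    then have "w = (w - 1) + 1" "w - 1 < n" by auto
    then show "e \<in> (\<lambda>b. {x+1, b+1}) ` {b\<in>{..<n}. {x+1, b+1} \<in> E}"
      using ew eE by (intro image_eqI[of _ _ "w - 1"]) auto
  qed
  finally show ?thesis unfolding degree_def by simp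
qed

lemma degree_sum_c:
  assumes E: "E \<in> graphs n" and x: "x < n"
  shows "(of_nat (degree E (x+1)) :: complex) = (\<Sum>b<n. of_bool ({x+1, b+1} \<in> E))"
  using degree_sum[OF E x] by (simp add: sum_of_bool_eq Int_def conj_commute)

lemma lap_rowsum:
  assumes E: "E \<in> graphs n" and x: "x < n"
  shows "(\<Sum>b<n. laplacian E x b) = 0"
proof -
  have "(\<Sum>b<n. laplacian E x b) = (\<Sum>b<n. (if x = b then of_nat (degree E (x+1)) else 0)) - (\<Sum>b<n. of_bool ({x+1, b+1} \<in> E))"
    unfolding laplacian_def by (simp add: sum_subtractf of_bool_def)
  also have "\<dots> = 0" using degree_sum_c[OF E x] x by simp
  finally show ?thesis .
qed

lemma lap_trace_nz:
  assumes E: "E \<in> graphs n" and ne: "E \<noteq> {}"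
  shows "trace_mat n (laplacian E) \<noteq> 0"
proof -
  have "trace_mat n (laplacian E) = (\<Sum>x<n. of_nat (degree E (x+1)))"
    unfolding trace_mat_def laplacian_def
  proof (intro sum.cong refl)
    fix x
    have "{x+1, x+1} \<notin> E" using graph_edge[OF E] by fastforce
    then show "(if x = x then of_nat (degree E (x + 1)) else 0) - (if {x + 1, x + 1} \<in> E then 1 else 0) = (of_nat (degree E (x+1)) :: complex)"
      by simp
  qed
  also have "\<dots> = of_nat (\<Sum>x<n. degree E (x+1))" by simp
  finally have tr: "trace_mat n (laplacian E) = of_nat (\<Sum>x<n. degree E (x+1))" .
  obtain e where eE: "e \<in> E" using ne by auto
  from graph_edge[OF E eE] obtain u v where "e = {u, v}" "e \<subseteq> {1..n}" by (auto simp: card_2_iff)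
  then have u: "u \<in> e" "u \<in> {1..n}" by auto
  have fin: "finite {e \<in> E. u \<in> e}" using graphs_finite[OF E] by simp
  have "degree E u > 0" unfolding degree_def using fin eE u(1) by (auto simp: card_gt_0_iff)
  moreover have "u = (u - 1) + 1" "u - 1 < n" using u by auto
  moreover have "degree E ((u-1)+1) \<le> (\<Sum>x<n. degree E (x+1))"
    using \<open>u - 1 < n\<close> by (intro member_le_sum) auto
  ultimately have "degree E ((u-1)+1) \<le> (\<Sum>x<n. degree E (x+1))" "degree E ((u-1)+1) > 0"
    by auto
  then have "(\<Sum>x<n. degree E (x+1)) > 0" by linarith
  then have "(of_nat (\<Sum>x<n. degree E (x+1)) :: complex) \<noteq> 0" by (simp only: of_nat_eq_0_iff)
  then show ?thesis using tr by metis
qed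

lemma idx_eq:
  fixes k l a b q :: nat
  assumes "a < q" "b < q"
  shows "(k*q+b = l*q+a) \<longleftrightarrow> (k = l \<and> b = a)"
proof
  assume h: "k*q+b = l*q+a"
  have "(k*q+b) div q = k" "(l*q+a) div q = l" "(k*q+b) mod q = b" "(l*q+a) mod q = a"
    using assms by auto
  with h show "k = l \<and> b = a" by metis
qed simp

lemma graph_crit:
  assumes E: "E \<in> graphs (p*q)" and ne: "E \<noteq> {}"
    and sep: "separable p q (normalized_laplacian (p*q) E)" and k: "k < p" and a: "a < q"
  shows "(\<Sum>l<p. \<Sum>b<q. of_bool ({k*q+a+1, l*q+b+1} \<in> E) :: nat)
       = (\<Sum>l<p. \<Sum>b<q. of_bool ({k*q+b+1, l*q+a+1} \<in> E))"
proof -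
  define T where "T = trace_mat (p*q) (laplacian E)"
  have T0: "T \<noteq> 0" using lap_trace_nz[OF E ne] by (simp add: T_def)
  have nl: "normalized_laplacian (p*q) E x y = laplacian E x y / T" for x y
    by (simp add: normalized_laplacian_def T_def)
  have "(\<Sum>x<p*q. \<Sum>y<p*q. normalized_laplacian (p*q) E x y) = (\<Sum>x<p*q. (\<Sum>y<p*q. laplacian E x y) / T)"
    by (simp add: nl sum_divide_distrib)
  also have "\<dots> = 0" using lap_rowsum[OF E] by simp
  finally have tot: "(\<Sum>x<p*q. \<Sum>y<p*q. normalized_laplacian (p*q) E x y) = 0" .
  from sep_crit[OF sep tot k a]
  have "(\<Sum>l<p. \<Sum>b<q. laplacian E (k*q+b) (l*q+a)) / T = 0"
    by (simp add: nl sum_divide_distrib)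
  then have c0: "(\<Sum>l<p. \<Sum>b<q. laplacian E (k*q+b) (l*q+a)) = 0" using T0 by simp
  define D where "D = (of_nat (degree E (k*q+a+1)) :: complex)"
  have "(\<Sum>l<p. \<Sum>b<q. laplacian E (k*q+b) (l*q+a))
      = (\<Sum>l<p. \<Sum>b<q. (if l = k then (if b = a then D else 0) else 0) - of_bool ({k*q+b+1, l*q+a+1} \<in> E))"
  proof (intro sum.cong refl)
    fix l b assume "l \<in> {..<p}" "b \<in> {..<q}"
    then have "(k*q+b = l*q+a) \<longleftrightarrow> (l = k \<and> b = a)" using idx_eq[OF a, of b k l] by auto
    then show "laplacian E (k*q+b) (l*q+a) = (if l = k then (if b = a then D else 0) else 0) - of_bool ({k*q+b+1, l*q+a+1} \<in> E)"
      unfolding laplacian_def D_def by auto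
  qed
  also have "\<dots> = D - (\<Sum>l<p. \<Sum>b<q. of_bool ({k*q+b+1, l*q+a+1} \<in> E))"
    using k a by (simp add: sum_subtractf sum_if_const)
  finally have e1: "D = (\<Sum>l<p. \<Sum>b<q. of_bool ({k*q+b+1, l*q+a+1} \<in> E))" using c0 by simp
  have "k*q+a < p*q" using k a by (rule idx_lt)
  from degree_sum_c[OF E this] have "D = (\<Sum>y<p*q. of_bool ({k*q+a+1, y+1} \<in> E))" by (simp add: D_def)
  also have "\<dots> = (\<Sum>l<p. \<Sum>b<q. of_bool ({k*q+a+1, l*q+b+1} \<in> E))" by (simp add: sum_prod_split)
  finally have e2: "D = (\<Sum>l<p. \<Sum>b<q. of_bool ({k*q+a+1, l*q+b+1} \<in> E))" .
  from e1 e2 have "(of_nat (\<Sum>l<p. \<Sum>b<q. of_bool ({k*q+a+1, l*q+b+1} \<in> E) :: nat) :: complex)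
       = of_nat (\<Sum>l<p. \<Sum>b<q. of_bool ({k*q+b+1, l*q+a+1} \<in> E) :: nat)"
    by simp
  then show ?thesis by (simp only: of_nat_eq_iff)
qed



definition w :: "nat \<Rightarrow> nat \<Rightarrow> nat \<Rightarrow> nat" where
  "w q j a = (j - 1) * q + a"

definition blk :: "nat \<Rightarrow> nat \<Rightarrow> nat set" where
  "blk q j = w q j ` {1..q}"

definition intra :: "nat \<Rightarrow> nat \<Rightarrow> nat set set" where
  "intra p q = (\<Union>j\<in>{1..p}. {e. e \<subseteq> blk q j \<and> card e = 2})"

definition Pp :: "nat \<Rightarrow> (nat \<times> nat) set" where
  "Pp p = {(j, l). j \<in> {1..p} \<and> l \<in> {1..p} \<and> j < l}"

definition inter :: "nat \<Rightarrow> nat \<Rightarrow> (nat \<times> nat \<Rightarrow> nat \<times> nat \<Rightarrow> nat) \<Rightarrow> nat set set" where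
  "inter p q B = {{w q j a, w q l b} | j l a b. (j, l) \<in> Pp p \<and> a \<in> {1..q} \<and> b \<in> {1..q} \<and> B (j, l) (a, b) = 1}"

lemma w_eq_iff:
  assumes "j \<ge> 1" "l \<ge> 1" "a \<in> {1..q}" "b \<in> {1..q}"
  shows "w q j a = w q l b \<longleftrightarrow> j = l \<and> a = b"
proof -
  have "w q j a = (j-1)*q + (a-1) + 1" "w q l b = (l-1)*q + (b-1) + 1" using assms by (auto simp: w_def)
  moreover have "((j-1)*q + (a-1) = (l-1)*q + (b-1)) \<longleftrightarrow> (j-1 = l-1 \<and> a-1 = b-1)"
    using idx_eq[of "b-1" q "a-1" "j-1" "l-1"] assms by auto
  ultimately show ?thesis using assms by auto
qed

lemma w_range:
  assumes "j \<in> {1..p}" "a \<in> {1..q}"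
  shows "w q j a \<in> {1..p*q}"
proof -
  have "(j-1)*q + (a-1) < p*q" using assms by (intro idx_lt) auto
  then show ?thesis using assms by (auto simp: w_def)
qed

lemma w_alt: "a \<ge> 1 \<Longrightarrow> j \<ge> 1 \<Longrightarrow> w q j a = (j-1)*q + (a-1) + 1"
  by (simp add: w_def)

lemma not_intra:
  assumes "j \<in> {1..p}" "l \<in> {1..p}" "j \<noteq> l" "a \<in> {1..q}" "b \<in> {1..q}"
  shows "{w q j a, w q l b} \<notin> intra p q"
proof
  assume "{w q j a, w q l b} \<in> intra p q"
  then obtain j' where j': "j' \<in> {1..p}" "{w q j a, w q l b} \<subseteq> blk q j'" unfolding intra_def by auto
  then obtain a' b' where "a' \<in> {1..q}" "b' \<in> {1..q}" "w q j a = w q j' a'" "w q l b = w q j' b'"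
    unfolding blk_def by auto
  then have "j = j'" "l = j'" using w_eq_iff assms j' by auto
  with assms show False by simp
qed

lemma inter_mem:
  assumes "j \<in> {1..p}" "l \<in> {1..p}" "j \<noteq> l" "a \<in> {1..q}" "b \<in> {1..q}"
  shows "{w q j a, w q l b} \<in> inter p q B \<longleftrightarrow> (if j < l then B (j, l) (a, b) = 1 else B (l, j) (b, a) = 1)"
proof
  assume "{w q j a, w q l b} \<in> inter p q B"
  then obtain j' l' a' b' where h: "{w q j a, w q l b} = {w q j' a', w q l' b'}" "(j', l') \<in> Pp p"
    "a' \<in> {1..q}" "b' \<in> {1..q}" "B (j', l') (a', b') = 1"
    unfolding inter_def by blast
  from h(2) have j'l': "j' \<in> {1..p}" "l' \<in> {1..p}" "j' < l'" by (auto simp: Pp_def)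
  from h(1) have "(w q j a = w q j' a' \<and> w q l b = w q l' b') \<or> (w q j a = w q l' b' \<and> w q l b = w q j' a')"
    by (auto simp: doubleton_eq_iff)
  then show "(if j < l then B (j, l) (a, b) = 1 else B (l, j) (b, a) = 1)"
  proof
    assume "w q j a = w q j' a' \<and> w q l b = w q l' b'"
    then have "j = j'" "a = a'" "l = l'" "b = b'" using w_eq_iff assms j'l' h(3,4) by auto
    then show ?thesis using h(5) j'l' by auto
  next
    assume "w q j a = w q l' b' \<and> w q l b = w q j' a'"
    then have "j = l'" "a = b'" "l = j'" "b = a'" using w_eq_iff assms j'l' h(3,4) by auto
    then show ?thesis using h(5) j'l' by auto
  qed
next
  assume h: "(if j < l then B (j, l) (a, b) = 1 else B (l, j) (b, a) = 1)"
  show "{w q j a, w q l b} \<in> inter p q B"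
  proof (cases "j < l")
    case True
    then have "B (j, l) (a, b) = 1" using h by simp
    then show ?thesis using True assms unfolding inter_def Pp_def
      by (rule_tac CollectI, rule_tac x=j in exI, rule_tac x=l in exI, rule_tac x=a in exI, rule_tac x=b in exI) simp
  next
    case False
    then have "l < j" using assms by simp
    moreover have "{w q j a, w q l b} = {w q l b, w q j a}" by auto
    moreover have "B (l, j) (b, a) = 1" using h False by simp
    ultimately show ?thesis using assms unfolding inter_def Pp_def
      by (rule_tac CollectI, rule_tac x=l in exI, rule_tac x=j in exI, rule_tac x=b in exI, rule_tac x=a in exI) simp
  qed
qed

definition NS :: "nat \<Rightarrow> (nat \<times> nat \<Rightarrow> nat) set" where
  "NS q = {B \<in> zo_mats q. line_sum_symmetric q B}"

definition NE :: "nat \<Rightarrow> (nat \<times> nat \<Rightarrow> nat) set" where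
  "NE q = {B \<in> zo_mats q. \<not> line_sum_symmetric q B}"

definition MA :: "nat \<Rightarrow> nat \<Rightarrow> (nat \<times> nat \<Rightarrow> nat) set" where
  "MA n i = {A \<in> zo_mats n.
        (\<forall>j\<in>{1..n}. \<forall>k\<in>{1..n}. A (j, k) = A (k, j)) \<and>
        (\<forall>j\<in>{1..n}. A (j, j) = 0) \<and>
        card {x \<in> {1..n} \<times> {1..n}. A x \<noteq> 0} = 2 * i \<and>
        (\<exists>j\<in>{1..n}. card {k \<in> {1..n}. A (j, k) = 1} = 1)}"

definition Fm :: "nat \<Rightarrow> (nat \<times> nat \<Rightarrow> nat) \<Rightarrow> nat \<times> nat \<Rightarrow> (nat \<times> nat \<Rightarrow> nat) set" where
  "Fm q A x = (if A x = 1 then NE q else NS q)"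

lemma sum_shift1: "(\<Sum>l<p. g (Suc l)) = (\<Sum>l\<in>{1..p}. (g l::'a::comm_monoid_add))"
  by (induction p) auto

lemma zo_val: "B \<in> zo_mats q \<Longrightarrow> a \<in> {1..q} \<Longrightarrow> b \<in> {1..q} \<Longrightarrow> B (a, b) = 0 \<or> B (a, b) = 1"
  unfolding zo_mats_def by (auto simp: PiE_iff)

lemma zo_of_bool: "B \<in> zo_mats q \<Longrightarrow> a \<in> {1..q} \<Longrightarrow> b \<in> {1..q} \<Longrightarrow> (of_bool (B (a, b) = 1) :: nat) = B (a, b)"
  using zo_val[of B q a b] by auto

lemma entangled:
  assumes q1: "q \<ge> 1" and A: "A \<in> MA p i" and B: "B \<in> PiE (Pp p) (Fm q A)" and Ein: "Ein \<subseteq> intra p q"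
  shows "Ein \<union> inter p q B \<in> {E \<in> graphs (p*q). E \<noteq> {} \<and> \<not> separable p q (normalized_laplacian (p*q) E)}"
proof -
  define E where "E = Ein \<union> inter p q B"
  have Asym: "\<And>j k. j \<in> {1..p} \<Longrightarrow> k \<in> {1..p} \<Longrightarrow> A (j, k) = A (k, j)"
    and Adiag: "\<And>j. j \<in> {1..p} \<Longrightarrow> A (j, j) = 0"
    using A unfolding MA_def by auto
  obtain j0 where j0: "j0 \<in> {1..p}" and c1: "card {k \<in> {1..p}. A (j0, k) = 1} = 1"
    using A unfolding MA_def by auto
  obtain l0 where l0s: "{k \<in> {1..p}. A (j0, k) = 1} = {l0}" using c1 by (rule card_1_singletonE)
  then have l0: "l0 \<in> {1..p}" "A (j0, l0) = 1" and only: "\<And>k. k \<in> {1..p} \<Longrightarrow> A (j0, k) = 1 \<Longrightarrow> k = l0"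
    by auto
  have l0j0: "l0 \<noteq> j0" using l0 Adiag[OF j0] by auto
  have Bx: "B x \<in> Fm q A x" if "x \<in> Pp p" for x using B that by (auto simp: PiE_iff)
  have Bzo: "B x \<in> zo_mats q" if "x \<in> Pp p" for x using Bx[OF that] unfolding Fm_def NE_def NS_def by (auto split: if_splits)
  have graphs: "E \<in> graphs (p*q)"
    unfolding graphs_def
  proof (rule PowI, rule subsetI)
    fix e assume "e \<in> E"
    then consider "e \<in> Ein" | "e \<in> inter p q B" unfolding E_def by auto
    then show "e \<in> {e. e \<subseteq> {1..p * q} \<and> card e = 2}"
    proof cases
      case 1
      then obtain j where "j \<in> {1..p}" "e \<subseteq> blk q j" "card e = 2" using Ein unfolding intra_def by auto
      moreover have "blk q j \<subseteq> {1..p*q}" using w_range \<open>j \<in> {1..p}\<close> unfolding blk_def by blast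
      ultimately show ?thesis by auto
    next
      case 2
      then obtain j l a b where h: "e = {w q j a, w q l b}" "(j, l) \<in> Pp p" "a \<in> {1..q}" "b \<in> {1..q}"
        unfolding inter_def by blast
      then have "j \<in> {1..p}" "l \<in> {1..p}" "j \<noteq> l" unfolding Pp_def by auto
      then have "w q j a \<noteq> w q l b" "w q j a \<in> {1..p*q}" "w q l b \<in> {1..p*q}"
        using w_eq_iff w_range h by auto
      then show ?thesis using h by auto
    qed
  qed
  define LH where "LH l a = (\<Sum>b\<in>{1..q}. of_bool ({w q j0 a, w q l b} \<in> E) :: nat)" for l a
  define RH where "RH l a = (\<Sum>b\<in>{1..q}. of_bool ({w q j0 b, w q l a} \<in> E) :: nat)" for l a
  have memE: "of_bool ({w q j0 a, w q l b} \<in> E) = (if j0 < l then B (j0, l) (a, b) else B (l, j0) (b, a))"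
    if "l \<in> {1..p}" "l \<noteq> j0" "a \<in> {1..q}" "b \<in> {1..q}" for l a b
  proof -
    have "{w q j0 a, w q l b} \<notin> Ein" using not_intra[OF j0 that(1) _ that(3,4)] that(2) Ein by auto
    then have mem: "({w q j0 a, w q l b} \<in> E) = (if j0 < l then B (j0, l) (a, b) = 1 else B (l, j0) (b, a) = 1)"
      using inter_mem[OF j0 that(1) _ that(3,4)] that(2) unfolding E_def by auto
    show ?thesis
    proof (cases "j0 < l")
      case True
      then have "(j0, l) \<in> Pp p" using j0 \<open>l \<in> {1..p}\<close> by (auto simp: Pp_def)
      then have "(of_bool (B (j0, l) (a, b) = 1) :: nat) = B (j0, l) (a, b)"
        using zo_of_bool Bzo that by blast
      then show ?thesis using mem True by simp
    next
      case False
      then have "(l, j0) \<in> Pp p" using j0 \<open>l \<in> {1..p}\<close> \<open>l \<noteq> j0\<close> by (auto simp: Pp_def)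
      then have "(of_bool (B (l, j0) (b, a) = 1) :: nat) = B (l, j0) (b, a)"
        using zo_of_bool Bzo that by blast
      then show ?thesis using mem False by simp
    qed
  qed
  have LHRH: "LH l a = (if j0 < l then (\<Sum>b=1..q. B (j0, l) (a, b)) else (\<Sum>b=1..q. B (l, j0) (b, a)))
      \<and> RH l a = (if j0 < l then (\<Sum>b=1..q. B (j0, l) (b, a)) else (\<Sum>b=1..q. B (l, j0) (a, b)))"
    if "l \<in> {1..p}" "l \<noteq> j0" "a \<in> {1..q}" for l a
    unfolding LH_def RH_def using memE that by (auto intro!: sum.cong)
  have eqj0: "LH j0 a = RH j0 a" for a
    unfolding LH_def RH_def by (simp add: insert_commute)
  have eqother: "LH l a = RH l a" if "l \<in> {1..p}" "l \<noteq> j0" "l \<noteq> l0" "a \<in> {1..q}" for l a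
  proof -
    have "A (j0, l) \<noteq> 1" using only that by auto
    show ?thesis
    proof (cases "j0 < l")
      case True
      then have "(j0, l) \<in> Pp p" using that j0 by (auto simp: Pp_def)
      then have "B (j0, l) \<in> NS q" using Bx \<open>A (j0, l) \<noteq> 1\<close> by (force simp: Fm_def)
      then have "(\<Sum>b=1..q. B (j0, l) (a, b)) = (\<Sum>b=1..q. B (j0, l) (b, a))"
        using that(4) unfolding NS_def line_sum_symmetric_def by auto
      then show ?thesis using LHRH[OF that(1,2,4)] True by simp
    next
      case False
      then have "(l, j0) \<in> Pp p" using that j0 by (auto simp: Pp_def)
      moreover have "A (l, j0) \<noteq> 1" using Asym[OF j0 that(1)] \<open>A (j0, l) \<noteq> 1\<close> by simp
      ultimately have "B (l, j0) \<in> NS q" using Bx by (force simp: Fm_def)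
      then have "(\<Sum>b=1..q. B (l, j0) (a, b)) = (\<Sum>b=1..q. B (l, j0) (b, a))"
        using that(4) unfolding NS_def line_sum_symmetric_def by auto
      then show ?thesis using LHRH[OF that(1,2,4)] False by simp
    qed
  qed
  obtain a0 where a0: "a0 \<in> {1..q}" and neq: "LH l0 a0 \<noteq> RH l0 a0"
  proof (cases "j0 < l0")
    case True
    then have "(j0, l0) \<in> Pp p" using l0 j0 by (auto simp: Pp_def)
    then have "B (j0, l0) \<in> NE q" using Bx l0 by (force simp: Fm_def)
    then obtain a where "a \<in> {1..q}" "(\<Sum>b=1..q. B (j0, l0) (a, b)) \<noteq> (\<Sum>b=1..q. B (j0, l0) (b, a))"
      unfolding NE_def line_sum_symmetric_def by auto
    then show ?thesis using LHRH[OF l0(1) l0j0] True that by auto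
  next
    case False
    then have "(l0, j0) \<in> Pp p" using l0 j0 l0j0 by (auto simp: Pp_def)
    moreover have "A (l0, j0) = 1" using Asym[OF j0 l0(1)] l0 by simp
    ultimately have "B (l0, j0) \<in> NE q" using Bx by (force simp: Fm_def)
    then obtain a where "a \<in> {1..q}" "(\<Sum>b=1..q. B (l0, j0) (a, b)) \<noteq> (\<Sum>b=1..q. B (l0, j0) (b, a))"
      unfolding NE_def line_sum_symmetric_def by auto
    then show ?thesis using LHRH[OF l0(1) l0j0] False that by (metis)
  qed
  have sumneq: "(\<Sum>l\<in>{1..p}. LH l a0) \<noteq> (\<Sum>l\<in>{1..p}. RH l a0)"
  proof -
    have "(\<Sum>l\<in>{1..p}. LH l a0) = LH l0 a0 + (\<Sum>l\<in>{1..p} - {l0}. LH l a0)"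
      using l0 by (simp add: sum.remove)
    moreover have "(\<Sum>l\<in>{1..p}. RH l a0) = RH l0 a0 + (\<Sum>l\<in>{1..p} - {l0}. RH l a0)"
      using l0 by (simp add: sum.remove)
    moreover have "(\<Sum>l\<in>{1..p} - {l0}. LH l a0) = (\<Sum>l\<in>{1..p} - {l0}. RH l a0)"
    proof (rule sum.cong[OF refl])
      fix l assume "l \<in> {1..p} - {l0}"
      then show "LH l a0 = RH l a0" using eqj0 eqother a0 by (cases "l = j0") auto
    qed
    ultimately show ?thesis using neq by simp
  qed
  have ne: "E \<noteq> {}"
  proof
    assume "E = {}"
    then have "LH l0 a0 = 0" "RH l0 a0 = 0" unfolding LH_def RH_def by auto
    with neq show False by simp
  qed
  have nsep: "\<not> separable p q (normalized_laplacian (p*q) E)"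
  proof
    assume sep: "separable p q (normalized_laplacian (p*q) E)"
    have k: "j0 - 1 < p" and a: "a0 - 1 < q" using j0 a0 by auto
    from graph_crit[OF graphs ne sep k a]
    have "(\<Sum>l<p. \<Sum>b<q. of_bool ({(j0-1)*q+(a0-1)+1, l*q+b+1} \<in> E) :: nat)
       = (\<Sum>l<p. \<Sum>b<q. of_bool ({(j0-1)*q+b+1, l*q+(a0-1)+1} \<in> E))" .
    moreover have "(j0-1)*q+(a0-1)+1 = w q j0 a0" using j0 a0 by (simp add: w_alt)
    moreover have "\<And>l b. l*q+b+1 = w q (Suc l) (Suc b)" "\<And>b. (j0-1)*q+b+1 = w q j0 (Suc b)"
      "\<And>l. l*q+(a0-1)+1 = w q (Suc l) a0"
      using a0 by (auto simp: w_def)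
    ultimately have "(\<Sum>l<p. \<Sum>b<q. of_bool ({w q j0 a0, w q (Suc l) (Suc b)} \<in> E) :: nat)
       = (\<Sum>l<p. \<Sum>b<q. of_bool ({w q j0 (Suc b), w q (Suc l) a0} \<in> E))" by simp
    moreover have X: "(\<Sum>l<p. \<Sum>b<q. f (Suc l) (Suc b)) = (\<Sum>l\<in>{1..p}. \<Sum>b\<in>{1..q}. (f l b :: nat))" for f
    proof -
      have "(\<Sum>l\<in>{1..p}. \<Sum>b\<in>{1..q}. f l b) = (\<Sum>l<p. \<Sum>b\<in>{1..q}. f (Suc l) b)"
        by (rule sum_shift1[symmetric])
      also have "\<dots> = (\<Sum>l<p. \<Sum>b<q. f (Suc l) (Suc b))"
        by (rule sum.cong[OF refl], rule sum_shift1[symmetric])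
      finally show ?thesis by simp
    qed
    ultimately have "(\<Sum>l\<in>{1..p}. LH l a0) = (\<Sum>l\<in>{1..p}. RH l a0)"
      unfolding LH_def RH_def
      using X[of "\<lambda>l b. of_bool ({w q j0 a0, w q l b} \<in> E)"] X[of "\<lambda>l b. of_bool ({w q j0 b, w q l a0} \<in> E)"]
      by simp
    with sumneq show False by simp
  qed
  show ?thesis using graphs ne nsep unfolding E_def by simp
qed



lemma finite_zo: "finite (zo_mats n)"
  unfolding zo_mats_def by (intro finite_PiE) auto

lemma card_zo: "card (zo_mats n) = 2 ^ (n^2)"
  unfolding zo_mats_def by (simp add: card_funcsetE card_cartesian_product power2_eq_square numeral_2_eq_2)

lemma card_NS: "card (NS q) = N_s q"
  unfolding NS_def N_s_def ..

lemma card_NE: "card (NE q) = N_e q"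
proof -
  have "NE q = zo_mats q - NS q" unfolding NE_def NS_def by auto
  then have "card (NE q) = card (zo_mats q) - card (NS q)"
    using finite_zo by (simp add: card_Diff_subset NS_def)
  then show ?thesis by (simp add: card_zo card_NS N_e_def)
qed

lemma finite_Pp: "finite (Pp p)"
  by (rule finite_subset[of _ "{1..p} \<times> {1..p}"]) (auto simp: Pp_def)

lemma card_Pp: "card (Pp p) = p * (p - 1) div 2"
proof -
  have "bij_betw (\<lambda>(j, l). {j, l}) (Pp p) {S. S \<subseteq> {1..p} \<and> card S = 2}"
  proof (rule bij_betwI')
    fix x y assume "x \<in> Pp p" "y \<in> Pp p"
    then obtain j l j' l' where "x = (j, l)" "y = (j', l')" "j < l" "j' < l'" by (auto simp: Pp_def)
    then show "((case x of (j, l) \<Rightarrow> {j, l}) = (case y of (j, l) \<Rightarrow> {j, l})) = (x = y)"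
      by (auto simp: doubleton_eq_iff)
  next
    fix x assume "x \<in> Pp p"
    then show "(case x of (j, l) \<Rightarrow> {j, l}) \<in> {S. S \<subseteq> {1..p} \<and> card S = 2}" by (auto simp: Pp_def)
  next
    fix S assume "S \<in> {S. S \<subseteq> {1..p} \<and> card S = 2}"
    then obtain u v where "S = {u, v}" "u \<noteq> v" "S \<subseteq> {1..p}" by (auto simp: card_2_iff)
    then show "\<exists>x\<in>Pp p. S = (case x of (j, l) \<Rightarrow> {j, l})"
      by (intro bexI[of _ "(min u v, max u v)"]) (auto simp: Pp_def min_def max_def insert_commute)
  qed
  then have "card (Pp p) = card {S. S \<subseteq> {1..p} \<and> card S = 2}" by (rule bij_betw_same_card)
  also have "\<dots> = p choose 2" by (simp add: n_subsets)
  finally show ?thesis by (simp add: choose_two)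
qed

lemma card_MA_edges:
  assumes A: "A \<in> MA p i"
  shows "card {x \<in> Pp p. A x = 1} = i"
proof -
  define Z1 where "Z1 = {x \<in> Pp p. A x = 1}"
  have zo: "A \<in> zo_mats p" and sym: "\<And>j k. j \<in> {1..p} \<Longrightarrow> k \<in> {1..p} \<Longrightarrow> A (j, k) = A (k, j)"
    and diag: "\<And>j. j \<in> {1..p} \<Longrightarrow> A (j, j) = 0"
    and c: "card {x \<in> {1..p} \<times> {1..p}. A x \<noteq> 0} = 2 * i"
    using A unfolding MA_def by auto
  have "{x \<in> {1..p} \<times> {1..p}. A x \<noteq> 0} = Z1 \<union> prod.swap ` Z1"
  proof (rule set_eqI)
    fix x :: "nat \<times> nat"
    obtain j l where x: "x = (j, l)" by (cases x)
    show "x \<in> {x \<in> {1..p} \<times> {1..p}. A x \<noteq> 0} \<longleftrightarrow> x \<in> Z1 \<union> prod.swap ` Z1"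
    proof
      assume h: "x \<in> {x \<in> {1..p} \<times> {1..p}. A x \<noteq> 0}"
      then have jl: "j \<in> {1..p}" "l \<in> {1..p}" "A (j, l) \<noteq> 0" using x by auto
      then have a1: "A (j, l) = 1" using zo_val[OF zo jl(1) jl(2)] by simp
      have "j \<noteq> l"
      proof
        assume "j = l" then show False using jl diag[of j] by simp
      qed
      then consider "j < l" | "l < j" by linarith
      then show "x \<in> Z1 \<union> prod.swap ` Z1"
      proof cases
        case 1 then show ?thesis using jl a1 x by (auto simp: Z1_def Pp_def)
      next
        case 2
        have "A (l, j) = 1" using a1 sym[OF jl(1,2)] by simp
        then have "(l, j) \<in> Z1" using jl 2 by (auto simp: Z1_def Pp_def)
        then show ?thesis using x by (auto intro: image_eqI[of _ _ "(l, j)"])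
      qed
    next
      assume "x \<in> Z1 \<union> prod.swap ` Z1"
      then consider "x \<in> Z1" | "prod.swap x \<in> Z1" by force
      then show "x \<in> {x \<in> {1..p} \<times> {1..p}. A x \<noteq> 0}"
      proof cases
        case 1 then show ?thesis by (auto simp: Z1_def Pp_def)
      next
        case 2
        then have "j \<in> {1..p}" "l \<in> {1..p}" "A (l, j) = 1" using x by (auto simp: Z1_def Pp_def)
        then show ?thesis using x sym[of l j] by simp
      qed
    qed
  qed
  moreover have "Z1 \<inter> prod.swap ` Z1 = {}" by (auto simp: Z1_def Pp_def)
  moreover have "finite Z1" using finite_Pp by (simp add: Z1_def)
  ultimately have "card {x \<in> {1..p} \<times> {1..p}. A x \<noteq> 0} = card Z1 + card (prod.swap ` Z1)"
    by (simp add: card_Un_disjoint)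
  also have "card (prod.swap ` Z1) = card Z1" by (rule card_image) simp
  finally show ?thesis using c by (simp add: Z1_def)
qed

lemma card_PiE_Fm:
  assumes A: "A \<in> MA p i"
  shows "card (PiE (Pp p) (Fm q A)) = N_e q ^ i * N_s q ^ (p * (p - 1) div 2 - i)"
proof -
  have "card (PiE (Pp p) (Fm q A)) = (\<Prod>x\<in>Pp p. if A x = 1 then N_e q else N_s q)"
    unfolding card_PiE[OF finite_Pp] Fm_def
    by (intro prod.cong refl) (simp add: card_NE card_NS)
  also have "\<dots> = (\<Prod>x\<in>Pp p \<inter> {x. A x = 1}. N_e q) * (\<Prod>x\<in>Pp p \<inter> - {x. A x = 1}. N_s q)"
    using finite_Pp by (rule prod.If_cases)
  also have "\<dots> = N_e q ^ card (Pp p \<inter> {x. A x = 1}) * N_s q ^ card (Pp p \<inter> - {x. A x = 1})" by simp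
  also have "card (Pp p \<inter> {x. A x = 1}) = i" using card_MA_edges[OF A] by (simp add: Int_def)
  also have "card (Pp p \<inter> - {x. A x = 1}) = card (Pp p) - card (Pp p \<inter> {x. A x = 1})"
  proof -
    have "Pp p \<inter> - {x. A x = 1} = Pp p - (Pp p \<inter> {x. A x = 1})" by blast
    then show ?thesis using finite_Pp by (simp add: card_Diff_subset)
  qed
  finally show ?thesis using card_MA_edges[OF A] by (simp add: card_Pp Int_def)
qed

lemma card_blk: "j \<ge> 1 \<Longrightarrow> card (blk q j) = q"
  unfolding blk_def by (subst card_image) (auto intro!: inj_onI simp: w_eq_iff)

lemma blk_disj: "j \<ge> 1 \<Longrightarrow> l \<ge> 1 \<Longrightarrow> j \<noteq> l \<Longrightarrow> blk q j \<inter> blk q l = {}"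
  unfolding blk_def by (auto simp: w_eq_iff)

lemma finite_blk_sets: "finite {e. e \<subseteq> blk q j \<and> card e = 2}"
  by (rule finite_subset[of _ "Pow (blk q j)"]) (auto simp: blk_def)

lemma finite_intra: "finite (intra p q)"
  unfolding intra_def using finite_blk_sets by auto

lemma card_intra: "card (intra p q) = p * q * (q - 1) div 2"
proof -
  have "card (intra p q) = (\<Sum>j\<in>{1..p}. card {e. e \<subseteq> blk q j \<and> card e = 2})"
    unfolding intra_def
  proof (rule card_UN_disjoint)
    show "\<forall>j\<in>{1..p}. \<forall>l\<in>{1..p}. j \<noteq> l \<longrightarrow> {e. e \<subseteq> blk q j \<and> card e = 2} \<inter> {e. e \<subseteq> blk q l \<and> card e = 2} = {}"
    proof (intro ballI impI)
      fix j l assume "j \<in> {1..p}" "l \<in> {1..p}" "j \<noteq> l"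
      then have d: "blk q j \<inter> blk q l = {}" by (intro blk_disj) auto
      show "{e. e \<subseteq> blk q j \<and> card e = 2} \<inter> {e. e \<subseteq> blk q l \<and> card e = 2} = {}"
      proof (rule ccontr)
        assume "{e. e \<subseteq> blk q j \<and> card e = 2} \<inter> {e. e \<subseteq> blk q l \<and> card e = 2} \<noteq> {}"
        then obtain e where "e \<subseteq> blk q j" "e \<subseteq> blk q l" "card e = 2" by blast
        then have "e = {}" using d by blast
        with \<open>card e = 2\<close> show False by simp
      qed
    qed
  qed (auto simp: finite_blk_sets)
  also have "\<dots> = (\<Sum>j\<in>{1..p}. q choose 2)"
  proof (rule sum.cong[OF refl])
    fix j assume "j \<in> {1..p}"
    then have "finite (blk q j)" "card (blk q j) = q" using card_blk by (auto simp: blk_def)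
    then show "card {e. e \<subseteq> blk q j \<and> card e = 2} = q choose 2" by (simp add: n_subsets)
  qed
  also have "\<dots> = p * (q * (q - 1) div 2)" by (simp add: choose_two)
  also have "\<dots> = p * (q * (q - 1)) div 2"
  proof -
    have "even (q * (q - 1))" by auto
    then show ?thesis by (simp add: div_mult_swap)
  qed
  finally show ?thesis by (simp add: mult.assoc)
qed

definition Phi :: "nat \<Rightarrow> nat \<Rightarrow> (nat \<times> nat \<Rightarrow> nat) \<times> (nat \<times> nat \<Rightarrow> nat \<times> nat \<Rightarrow> nat) \<times> nat set set \<Rightarrow> nat set set" where
  "Phi p q t = snd (snd t) \<union> inter p q (fst (snd t))"

definition SS :: "nat \<Rightarrow> nat \<Rightarrow> nat \<Rightarrow> ((nat \<times> nat \<Rightarrow> nat) \<times> (nat \<times> nat \<Rightarrow> nat \<times> nat \<Rightarrow> nat) \<times> nat set set) set" where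
  "SS p q i = Sigma (MA p i) (\<lambda>A. PiE (Pp p) (Fm q A) \<times> Pow (intra p q))"

lemma inter_intra_disj: "inter p q B \<inter> intra p q = {}"
proof (rule ccontr)
  assume "inter p q B \<inter> intra p q \<noteq> {}"
  then obtain e where e: "e \<in> inter p q B" "e \<in> intra p q" by blast
  then obtain j l a b where h: "e = {w q j a, w q l b}" "(j, l) \<in> Pp p" "a \<in> {1..q}" "b \<in> {1..q}"
    unfolding inter_def by blast
  then have "j \<in> {1..p}" "l \<in> {1..p}" "j \<noteq> l" by (auto simp: Pp_def)
  from not_intra[OF this h(3,4)] h(1) e(2) show False by simp
qed

lemma A_from_B:
  assumes "B \<in> PiE (Pp p) (Fm q A)" "x \<in> Pp p"
  shows "A x = 1 \<longleftrightarrow> B x \<in> NE q"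
proof -
  have "B x \<in> Fm q A x" using assms by (auto simp: PiE_iff)
  then show ?thesis unfolding Fm_def NE_def NS_def by (auto split: if_splits)
qed

lemma zo_ext:
  assumes "B \<in> zo_mats q" "B' \<in> zo_mats q" "\<And>a b. a \<in> {1..q} \<Longrightarrow> b \<in> {1..q} \<Longrightarrow> (B (a, b) = 1 \<longleftrightarrow> B' (a, b) = 1)"
  shows "B = B'"
proof (rule ext)
  fix x :: "nat \<times> nat"
  obtain a b where x: "x = (a, b)" by (cases x)
  show "B x = B' x"
  proof (cases "a \<in> {1..q} \<and> b \<in> {1..q}")
    case True
    then show ?thesis using zo_val[OF assms(1), of a b] zo_val[OF assms(2), of a b] assms(3)[of a b] x by auto
  next
    case False
    then have nx: "x \<notin> {1..q} \<times> {1..q}" using x by simp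
    have "B x = undefined" using PiE_arb[OF assms(1)[unfolded zo_mats_def] nx] .
    moreover have "B' x = undefined" using PiE_arb[OF assms(2)[unfolded zo_mats_def] nx] .
    ultimately show ?thesis by simp
  qed
qed

lemma Phi_inj: "inj_on (Phi p q) (\<Union>i. SS p q i)"
proof (rule inj_onI)
  fix t t' assume t: "t \<in> (\<Union>i. SS p q i)" and t': "t' \<in> (\<Union>i. SS p q i)" and eq: "Phi p q t = Phi p q t'"
  obtain A B Ein where tt: "t = (A, B, Ein)" by (cases t)
  obtain A' B' Ein' where tt': "t' = (A', B', Ein')" by (cases t')
  from t obtain i where A: "A \<in> MA p i" and B: "B \<in> PiE (Pp p) (Fm q A)" and Ein: "Ein \<subseteq> intra p q"
    unfolding tt SS_def by auto
  from t' obtain i' where A': "A' \<in> MA p i'" and B': "B' \<in> PiE (Pp p) (Fm q A')" and Ein': "Ein' \<subseteq> intra p q"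
    unfolding tt' SS_def by auto
  define E where "E = Ein \<union> inter p q B"
  have E': "E = Ein' \<union> inter p q B'" using eq unfolding E_def tt tt' Phi_def by simp
  have "Ein = E \<inter> intra p q" using Ein inter_intra_disj[of p q B] unfolding E_def by blast
  moreover have "Ein' = E \<inter> intra p q" using Ein' inter_intra_disj[of p q B'] unfolding E' by blast
  ultimately have eqEin: "Ein = Ein'" by simp
  have Bzo: "B x \<in> zo_mats q" "B' x \<in> zo_mats q" if "x \<in> Pp p" for x
  proof -
    have "B x \<in> Fm q A x" "B' x \<in> Fm q A' x" using B B' that by (auto simp: PiE_iff)
    then show "B x \<in> zo_mats q" "B' x \<in> zo_mats q" unfolding Fm_def NE_def NS_def by (auto split: if_splits)
  qed
  have eqB: "B = B'"
  proof (rule ext)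
    fix x show "B x = B' x"
    proof (cases "x \<in> Pp p")
      case False then show ?thesis using PiE_arb[OF B False] PiE_arb[OF B' False] by simp
    next
      case True
      then obtain j l where x: "x = (j, l)" "j \<in> {1..p}" "l \<in> {1..p}" "j < l" by (auto simp: Pp_def)
      show ?thesis
      proof (rule zo_ext[OF Bzo[OF True]])
        fix a b assume ab: "a \<in> {1..q}" "b \<in> {1..q}"
        have ni: "{w q j a, w q l b} \<notin> intra p q" using not_intra[OF x(2,3) _ ab] x(4) by simp
        have "B x (a, b) = 1 \<longleftrightarrow> {w q j a, w q l b} \<in> inter p q B"
          using inter_mem[OF x(2,3) _ ab] x by simp
        also have "\<dots> \<longleftrightarrow> {w q j a, w q l b} \<in> E" unfolding E_def using ni Ein by blast
        also have "\<dots> \<longleftrightarrow> {w q j a, w q l b} \<in> inter p q B'" unfolding E' using ni Ein' by blast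
        also have "\<dots> \<longleftrightarrow> B' x (a, b) = 1"
          using inter_mem[OF x(2,3) _ ab] x by simp
        finally show "B x (a, b) = 1 \<longleftrightarrow> B' x (a, b) = 1" .
      qed
    qed
  qed
  have eqA: "A = A'"
  proof -
    have Azo: "A \<in> zo_mats p" "A' \<in> zo_mats p" using A A' unfolding MA_def by blast+
    have symA: "\<And>j k. j \<in> {1..p} \<Longrightarrow> k \<in> {1..p} \<Longrightarrow> A (j, k) = A (k, j)"
      and diagA: "\<And>j. j \<in> {1..p} \<Longrightarrow> A (j, j) = 0" using A unfolding MA_def by blast+
    have symA': "\<And>j k. j \<in> {1..p} \<Longrightarrow> k \<in> {1..p} \<Longrightarrow> A' (j, k) = A' (k, j)"
      and diagA': "\<And>j. j \<in> {1..p} \<Longrightarrow> A' (j, j) = 0" using A' unfolding MA_def by blast+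
    have pp: "A x = 1 \<longleftrightarrow> A' x = 1" if "x \<in> Pp p" for x
      using A_from_B[OF B that] A_from_B[OF B' that] eqB by simp
    show ?thesis
    proof (rule zo_ext[OF Azo])
      fix j l assume jl: "j \<in> {1..p}" "l \<in> {1..p}"
      consider "j = l" | "j < l" | "l < j" by linarith
      then show "A (j, l) = 1 \<longleftrightarrow> A' (j, l) = 1"
      proof cases
        case 1 then show ?thesis using diagA[OF jl(1)] diagA'[OF jl(1)] by simp
      next
        case 2 then have "(j, l) \<in> Pp p" using jl by (simp add: Pp_def)
        then show ?thesis using pp by blast
      next
        case 3 then have "(l, j) \<in> Pp p" using jl by (simp add: Pp_def)
        then show ?thesis using pp symA[OF jl] symA'[OF jl] by metis
      qed
    qed
  qed
  show "t = t'" using eqA eqB eqEin tt tt' by simp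
qed


lemma finite_MA: "finite (MA p i)"
  by (rule finite_subset[OF _ finite_zo[of p]]) (auto simp: MA_def)

lemma M_MA: "M p i = card (MA p i)"
  unfolding M_def MA_def ..

lemma finite_Fm: "finite (Fm q A x)"
  unfolding Fm_def NE_def NS_def using finite_zo by auto

lemma finite_SS: "finite (SS p q i)"
  unfolding SS_def using finite_MA finite_Pp finite_Fm finite_intra
  by (intro finite_SigmaI finite_cartesian_product finite_PiE) auto

lemma card_SS:
  "card (SS p q i) = M p i * N_e q ^ i * N_s q ^ (p * (p - 1) div 2 - i) * 2 ^ (p * q * (q - 1) div 2)"
proof -
  have "card (SS p q i) = (\<Sum>A\<in>MA p i. card (PiE (Pp p) (Fm q A) \<times> Pow (intra p q)))"
    unfolding SS_def using finite_MA finite_Pp finite_Fm finite_intra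
    by (intro card_SigmaI) (auto intro!: finite_cartesian_product finite_PiE)
  also have "\<dots> = (\<Sum>A\<in>MA p i. N_e q ^ i * N_s q ^ (p * (p - 1) div 2 - i) * 2 ^ (p * q * (q - 1) div 2))"
    by (intro sum.cong refl) (simp add: card_cartesian_product card_PiE_Fm card_Pow finite_intra card_intra)
  also have "\<dots> = M p i * N_e q ^ i * N_s q ^ (p * (p - 1) div 2 - i) * 2 ^ (p * q * (q - 1) div 2)"
    by (simp add: M_MA mult.assoc)
  finally show ?thesis .
qed

theorem mainTheorem3:
  fixes p q :: nat
  assumes "p \<ge> 1" and "q \<ge> 1"
  shows "L_e p q \<ge>
    (\<Sum>i = 1..(p - 1) * (p - 2) div 2 + 1.
        M p i * N_e q ^ i * N_s q ^ (p * (p - 1) div 2 - i) * 2 ^ (p * q * (q - 1) div 2))"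
proof -
  define I where "I = {1..(p - 1) * (p - 2) div 2 + 1}"
  define Ent where "Ent = {E \<in> graphs (p*q). E \<noteq> {} \<and> \<not> separable p q (normalized_laplacian (p*q) E)}"
  have "(\<Sum>i\<in>I. M p i * N_e q ^ i * N_s q ^ (p * (p - 1) div 2 - i) * 2 ^ (p * q * (q - 1) div 2))
      = (\<Sum>i\<in>I. card (SS p q i))" by (simp add: card_SS)
  also have "\<dots> = card (\<Union>i\<in>I. SS p q i)"
  proof (rule card_UN_disjoint[symmetric])
    show "finite I" by (simp add: I_def)
    show "\<forall>i\<in>I. finite (SS p q i)" by (simp add: finite_SS)
    show "\<forall>i\<in>I. \<forall>j\<in>I. i \<noteq> j \<longrightarrow> SS p q i \<inter> SS p q j = {}"
    proof (intro ballI impI)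
      fix i j :: nat assume "i \<in> I" "j \<in> I" "i \<noteq> j"
      show "SS p q i \<inter> SS p q j = {}"
      proof (rule ccontr)
        assume "SS p q i \<inter> SS p q j \<noteq> {}"
        then obtain A where "A \<in> MA p i" "A \<in> MA p j" unfolding SS_def by blast
        then have "2 * i = 2 * j" unfolding MA_def by auto
        with \<open>i \<noteq> j\<close> show False by simp
      qed
    qed
  qed
  also have "\<dots> = card (Phi p q ` (\<Union>i\<in>I. SS p q i))"
    by (rule card_image[symmetric], rule inj_on_subset[OF Phi_inj]) auto
  also have "\<dots> \<le> card Ent"
  proof (rule card_mono)
    show "finite Ent" unfolding Ent_def graphs_def by (rule finite_subset[of _ "Pow (Pow {1..p*q})"]) auto
    show "Phi p q ` (\<Union>i\<in>I. SS p q i) \<subseteq> Ent"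
    proof
      fix E assume "E \<in> Phi p q ` (\<Union>i\<in>I. SS p q i)"
      then obtain i A B Ein where "A \<in> MA p i" "B \<in> PiE (Pp p) (Fm q A)" "Ein \<subseteq> intra p q"
        "E = Ein \<union> inter p q B" unfolding SS_def Phi_def by auto
      then show "E \<in> Ent" unfolding Ent_def using entangled[OF assms(2)] by blast
    qed
  qed
  also have "card Ent = L_e p q" unfolding Ent_def L_e_def ..
  finally show ?thesis unfolding I_def .
qed


end
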